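(* Let $G$ be a finitely generated infinite group with finite generating set $S_G$ and let $H\ne\{1\}$ be a finite group; equip $H\wr G$ with the word metric with respect to $(H\setminus\{1\})\cup S_G$. Let $\gamma$ be the growth function of $G$ and $D^n_G$ an $n$-dimensional control function of $G$. Then for any $k\ge n$ there is a $k$-dimensional control function of $H\wr G$ which is weakly dominated by $t\mapsto (D^n_G(t)+t)\cdot\gamma(D^n_G(t)+t)$. Also, for any $k\ge n$, every $k$-dimensional control function of $H\wr G$ weakly dominates $\gamma$.
   Context: Wreath product: $H\wr G$ is the set of pairs $(f,g)$, $f:G\to H$ finitely supported, with $(f_1,g_1)(f_2,g_2)=(f_1\cdot(g_1f_2),g_1g_2)$ where $(gf)(\gamma)=f(g^{-1}\gamma)$; $g\in G$ is identified with $(1,g)$ and $a\in H$ with $(f_a,1)$. Growth function: $\gamma(r)=\#\{g\in G:|g|_{S_G}<r\}$. For a metric space $X$, $r>0$: $r$-components of $Y\subseteq X$ are classes of points joined by sequences in $Y$ with consecutive distances $<r$. An $m$-dimensional control function of $X$ is $D:\mathbb{R}_+\to\mathbb{R}_+\cup\{\infty\}$ such that for each $r>0$ there is a cover $\{X_0,\dots,X_m\}$ of $X$ such that every open ball $B(x,r)$ lies in some $X_i$ and every $r$-component of each $X_i$ has diameter at most $D(r)$. For functions $f,g$ on $\mathbb{R}_+$, $f$ weakly dominates $g$ if there are constants $\lambda\ge1$, $C\ge0$ with $g(t)\le\lambda f(\lambda t+C)+C$ for all $t\in\mathbb{R}_+$. *)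

theory Defs
  imports "HOL-Algebra.Algebra" "HOL-Library.Extended_Real"
begin

definition word_len :: "('a, 'b) monoid_scheme \<Rightarrow> 'a set \<Rightarrow> 'a \<Rightarrow> nat" where
  "word_len M S x = (LEAST n. \<exists>ws. length ws = n \<and> set ws \<subseteq> S \<union> (m_inv M ` S)
                        \<and> foldr (\<lambda>a b. a \<otimes>\<^bsub>M\<^esub> b) ws \<one>\<^bsub>M\<^esub> = x)"

definition word_dist :: "('a, 'b) monoid_scheme \<Rightarrow> 'a set \<Rightarrow> 'a \<Rightarrow> 'a \<Rightarrow> real" where
  "word_dist M S x y = real (word_len M S (inv\<^bsub>M\<^esub> x \<otimes>\<^bsub>M\<^esub> y))"

definition growth :: "('a, 'b) monoid_scheme \<Rightarrow> 'a set \<Rightarrow> real \<Rightarrow> nat" where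
  "growth G S r = card {g \<in> carrier G. real (word_len G S g) < r}"

definition open_ball_in :: "'a set \<Rightarrow> ('a \<Rightarrow> 'a \<Rightarrow> real) \<Rightarrow> 'a \<Rightarrow> real \<Rightarrow> 'a set" where
  "open_ball_in Sp d x r = {y \<in> Sp. d x y < r}"

definition same_r_component :: "'a set \<Rightarrow> ('a \<Rightarrow> 'a \<Rightarrow> real) \<Rightarrow> real \<Rightarrow> 'a \<Rightarrow> 'a \<Rightarrow> bool" where
  "same_r_component Y d r x y \<longleftrightarrow> x \<in> Y \<and> (\<lambda>a b. a \<in> Y \<and> b \<in> Y \<and> d a b < r)\<^sup>*\<^sup>* x y"

text \<open>m-dimensional control function D : R_+ \<rightarrow> R_+ \<union> {\<infinity>} of the metric space (Sp,d).
  "every r-component has diameter at most D(r)" is written out as: any two points of the same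
  r-component have distance at most D(r).\<close>
definition control_function ::
  "'a set \<Rightarrow> ('a \<Rightarrow> 'a \<Rightarrow> real) \<Rightarrow> nat \<Rightarrow> (real \<Rightarrow> ereal) \<Rightarrow> bool" where
  "control_function Sp d m D \<longleftrightarrow>
     (\<forall>t\<ge>0. 0 \<le> D t) \<and>
     (\<forall>r>0. \<exists>U :: nat \<Rightarrow> 'a set.
        (\<forall>i\<le>m. U i \<subseteq> Sp) \<and> Sp \<subseteq> (\<Union>i\<le>m. U i) \<and>
        (\<forall>x\<in>Sp. \<exists>i\<le>m. open_ball_in Sp d x r \<subseteq> U i) \<and>
        (\<forall>i\<le>m. \<forall>x y. same_r_component (U i) d r x y \<longrightarrow> ereal (d x y) \<le> D r))"

definition weakly_dominates :: "(real \<Rightarrow> ereal) \<Rightarrow> (real \<Rightarrow> ereal) \<Rightarrow> bool" where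
  "weakly_dominates f g \<longleftrightarrow>
     (\<exists>lam C. lam \<ge> 1 \<and> C \<ge> 0 \<and>
        (\<forall>t\<ge>0. g t \<le> ereal lam * f (lam * t + C) + ereal C))"

definition wr_carrier :: "('h, 'c) monoid_scheme \<Rightarrow> ('g, 'd) monoid_scheme \<Rightarrow> (('g \<Rightarrow> 'h) \<times> 'g) set" where
  "wr_carrier H G = {(f, g). f ` carrier G \<subseteq> carrier H \<and> (\<forall>x. x \<notin> carrier G \<longrightarrow> f x = \<one>\<^bsub>H\<^esub>)
                         \<and> finite {x \<in> carrier G. f x \<noteq> \<one>\<^bsub>H\<^esub>} \<and> g \<in> carrier G}"

text \<open>(f1,g1)(f2,g2) = (f1 \<cdot> (g1 f2), g1 g2) with (g f)(x) = f(g^{-1} x).\<close>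
definition wr_mult :: "('h, 'c) monoid_scheme \<Rightarrow> ('g, 'd) monoid_scheme
     \<Rightarrow> ('g \<Rightarrow> 'h) \<times> 'g \<Rightarrow> ('g \<Rightarrow> 'h) \<times> 'g \<Rightarrow> ('g \<Rightarrow> 'h) \<times> 'g" where
  "wr_mult H G p q =
     ((\<lambda>x. if x \<in> carrier G then fst p x \<otimes>\<^bsub>H\<^esub> fst q (inv\<^bsub>G\<^esub> (snd p) \<otimes>\<^bsub>G\<^esub> x) else \<one>\<^bsub>H\<^esub>),
      snd p \<otimes>\<^bsub>G\<^esub> snd q)"

definition wreath :: "('h, 'c) monoid_scheme \<Rightarrow> ('g, 'd) monoid_scheme
                        \<Rightarrow> (('g \<Rightarrow> 'h) \<times> 'g) monoid" where
  "wreath H G = \<lparr>carrier = wr_carrier H G, monoid.mult = wr_mult H G, one = ((\<lambda>x. \<one>\<^bsub>H\<^esub>), \<one>\<^bsub>G\<^esub>)\<rparr>"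

definition wr_base :: "('h, 'c) monoid_scheme \<Rightarrow> ('g, 'd) monoid_scheme \<Rightarrow> 'h \<Rightarrow> ('g \<Rightarrow> 'h) \<times> 'g" where
  "wr_base H G a = ((\<lambda>x. if x = \<one>\<^bsub>G\<^esub> then a else \<one>\<^bsub>H\<^esub>), \<one>\<^bsub>G\<^esub>)"

definition wr_top :: "('h, 'c) monoid_scheme \<Rightarrow> 'g \<Rightarrow> ('g \<Rightarrow> 'h) \<times> 'g" where
  "wr_top H g = ((\<lambda>x. \<one>\<^bsub>H\<^esub>), g)"

definition wreath_gens :: "('h, 'c) monoid_scheme \<Rightarrow> ('g, 'd) monoid_scheme \<Rightarrow> 'g set
                             \<Rightarrow> (('g \<Rightarrow> 'h) \<times> 'g) set" where
  "wreath_gens H G S = wr_base H G ` (carrier H - {\<one>\<^bsub>H\<^esub>}) \<union> wr_top H ` S"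

end

theory Submission
  imports Defs
begin


definition reach :: "('a,'b) monoid_scheme \<Rightarrow> 'a set \<Rightarrow> nat \<Rightarrow> 'a \<Rightarrow> bool" where
  "reach M S n x \<longleftrightarrow> (\<exists>ws. length ws \<le> n \<and> set ws \<subseteq> S \<union> m_inv M ` S
      \<and> foldr (\<lambda>a b. a \<otimes>\<^bsub>M\<^esub> b) ws \<one>\<^bsub>M\<^esub> = x)"

locale gword = group M for M (structure) +
  fixes S assumes S_sub: "S \<subseteq> carrier M"
begin

lemma gens_carrier: "S \<union> m_inv M ` S \<subseteq> carrier M"
  using S_sub by auto

lemma gens_inv: "s \<in> S \<union> m_inv M ` S \<Longrightarrow> inv s \<in> S \<union> m_inv M ` S"
  using S_sub by auto

lemma foldr_closed: "set ws \<subseteq> carrier M \<Longrightarrow> foldr (\<lambda>a b. a \<otimes> b) ws \<one> \<in> carrier M"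
  by (induction ws) simp_all

lemma foldr_shift: "set ws \<subseteq> carrier M \<Longrightarrow> z \<in> carrier M \<Longrightarrow>
   foldr (\<lambda>a b. a \<otimes> b) ws z = foldr (\<lambda>a b. a \<otimes> b) ws \<one> \<otimes> z"
proof (induction ws)
  case Nil then show ?case by simp
next
  case (Cons a ws)
  have IH: "foldr (\<lambda>a b. a \<otimes> b) ws z = foldr (\<lambda>a b. a \<otimes> b) ws \<one> \<otimes> z"
    using Cons by simp
  have c: "foldr (\<lambda>a b. a \<otimes> b) ws \<one> \<in> carrier M" "a \<in> carrier M"
    using Cons.prems foldr_closed[of ws] by auto
  have "foldr (\<lambda>a b. a \<otimes> b) (a # ws) z = a \<otimes> foldr (\<lambda>a b. a \<otimes> b) ws z" by simp
  also have "\<dots> = a \<otimes> (foldr (\<lambda>a b. a \<otimes> b) ws \<one> \<otimes> z)" by (simp only: IH)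
  also have "\<dots> = (a \<otimes> foldr (\<lambda>a b. a \<otimes> b) ws \<one>) \<otimes> z"
    using c Cons.prems by (simp only: m_assoc)
  finally show ?case by simp
qed

lemma foldr_append: "set xs \<subseteq> carrier M \<Longrightarrow> set ys \<subseteq> carrier M \<Longrightarrow>
   foldr (\<lambda>a b. a \<otimes> b) (xs @ ys) \<one> = foldr (\<lambda>a b. a \<otimes> b) xs \<one> \<otimes> foldr (\<lambda>a b. a \<otimes> b) ys \<one>"
  using foldr_shift[of xs "foldr (\<lambda>a b. a \<otimes> b) ys \<one>"] foldr_closed[of ys] by simp

lemma reach_carrier: "reach M S n x \<Longrightarrow> x \<in> carrier M"
  unfolding reach_def using foldr_closed gens_carrier by blast

lemma reach_mono: "reach M S n x \<Longrightarrow> n \<le> m \<Longrightarrow> reach M S m x"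
  unfolding reach_def using order_trans by blast

lemma reach_one: "reach M S 0 \<one>"
  unfolding reach_def by (intro exI[of _ "[]"]) auto

lemma reach_gen: "s \<in> S \<union> m_inv M ` S \<Longrightarrow> reach M S 1 s"
  unfolding reach_def using gens_carrier by (intro exI[of _ "[s]"]) auto

lemma reach_mult: "reach M S a x \<Longrightarrow> reach M S b y \<Longrightarrow> reach M S (a + b) (x \<otimes> y)"
proof -
  assume "reach M S a x" "reach M S b y"
  then obtain xs ys where xs: "length xs \<le> a" "set xs \<subseteq> S \<union> m_inv M ` S" "foldr (\<lambda>a b. a \<otimes> b) xs \<one> = x"
    and ys: "length ys \<le> b" "set ys \<subseteq> S \<union> m_inv M ` S" "foldr (\<lambda>a b. a \<otimes> b) ys \<one> = y"
    unfolding reach_def by blast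
  show ?thesis unfolding reach_def
    apply (intro exI[of _ "xs @ ys"])
    using xs ys gens_carrier foldr_append[of xs ys] by auto
qed

lemma foldr_rev_inv: "set ws \<subseteq> carrier M \<Longrightarrow>
  foldr (\<lambda>a b. a \<otimes> b) (rev (map (m_inv M) ws)) \<one> = inv (foldr (\<lambda>a b. a \<otimes> b) ws \<one>)"
proof (induction ws)
  case Nil then show ?case by simp
next
  case (Cons a ws)
  have "foldr (\<lambda>a b. a \<otimes> b) (rev (map (m_inv M) (a # ws))) \<one>
      = foldr (\<lambda>a b. a \<otimes> b) (rev (map (m_inv M) ws)) \<one> \<otimes> foldr (\<lambda>a b. a \<otimes> b) [inv a] \<one>"
    using Cons.prems foldr_append[of "rev (map (m_inv M) ws)" "[inv a]"] by auto
  also have "\<dots> = inv (foldr (\<lambda>a b. a \<otimes> b) ws \<one>) \<otimes> inv a" using Cons by auto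
  also have "\<dots> = inv (a \<otimes> foldr (\<lambda>a b. a \<otimes> b) ws \<one>)"
    using Cons.prems foldr_closed by (simp add: inv_mult_group)
  finally show ?case by simp
qed

lemma reach_inv: "reach M S n x \<Longrightarrow> reach M S n (inv x)"
proof -
  assume "reach M S n x"
  then obtain xs where xs: "length xs \<le> n" "set xs \<subseteq> S \<union> m_inv M ` S" "foldr (\<lambda>a b. a \<otimes> b) xs \<one> = x"
    unfolding reach_def by blast
  show ?thesis unfolding reach_def
    apply (intro exI[of _ "rev (map (m_inv M) xs)"])
    using xs gens_carrier gens_inv foldr_rev_inv[of xs] by auto
qed

lemma word_len_le: "reach M S n x \<Longrightarrow> word_len M S x \<le> n"
proof -
  assume "reach M S n x"
  then obtain xs where xs: "length xs \<le> n" "set xs \<subseteq> S \<union> m_inv M ` S" "foldr (\<lambda>a b. a \<otimes> b) xs \<one> = x"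
    unfolding reach_def by blast
  have "word_len M S x \<le> length xs" unfolding word_len_def
    by (rule Least_le) (use xs in blast)
  with xs show ?thesis by simp
qed

lemma reach_word_len: "reach M S n x \<Longrightarrow> reach M S (word_len M S x) x"
proof -
  assume "reach M S n x"
  then have "\<exists>m ws. length ws = m \<and> set ws \<subseteq> S \<union> m_inv M ` S \<and> foldr (\<lambda>a b. a \<otimes> b) ws \<one> = x"
    unfolding reach_def by blast
  then have "\<exists>ws. length ws = word_len M S x \<and> set ws \<subseteq> S \<union> m_inv M ` S \<and> foldr (\<lambda>a b. a \<otimes> b) ws \<one> = x"
    unfolding word_len_def by (rule LeastI_ex)
  then show ?thesis unfolding reach_def by (metis order_refl)
qed

lemma generate_reach: "x \<in> generate M S \<Longrightarrow> \<exists>n. reach M S n x"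
proof (induction rule: generate.induct)
  case one then show ?case using reach_one by blast
next
  case (incl h) then show ?case using reach_gen by blast
next
  case (inv h) then show ?case using reach_gen by blast
next
  case (eng h1 h2) then show ?case using reach_mult by blast
qed

lemma word_len_one: "word_len M S \<one> = 0"
  using word_len_le[OF reach_one] by simp

lemma word_len_mult: "reach M S a x \<Longrightarrow> reach M S b y \<Longrightarrow>
   word_len M S (x \<otimes> y) \<le> word_len M S x + word_len M S y"
  by (meson reach_mult reach_word_len word_len_le)

end




locale wrctx = G: group G + H: group H
  for G :: "('g,'d) monoid_scheme" and H :: "('h,'c) monoid_scheme"
begin

abbreviation "W \<equiv> wreath H G"

lemma W_carrier: "(f, g) \<in> carrier W \<longleftrightarrow> (\<forall>x\<in>carrier G. f x \<in> carrier H) \<and> (\<forall>x. x \<notin> carrier G \<longrightarrow> f x = \<one>\<^bsub>H\<^esub>)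
   \<and> finite {x \<in> carrier G. f x \<noteq> \<one>\<^bsub>H\<^esub>} \<and> g \<in> carrier G"
  by (auto simp: wreath_def wr_carrier_def)

lemma W_mult: "(f1, g1) \<otimes>\<^bsub>W\<^esub> (f2, g2) =
  ((\<lambda>x. if x \<in> carrier G then f1 x \<otimes>\<^bsub>H\<^esub> f2 (inv\<^bsub>G\<^esub> g1 \<otimes>\<^bsub>G\<^esub> x) else \<one>\<^bsub>H\<^esub>), g1 \<otimes>\<^bsub>G\<^esub> g2)"
  unfolding wreath_def wr_mult_def monoid.select_convs fst_conv snd_conv by (rule refl)

lemma W_one: "\<one>\<^bsub>W\<^esub> = ((\<lambda>x. \<one>\<^bsub>H\<^esub>), \<one>\<^bsub>G\<^esub>)"
  by (simp add: wreath_def)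

lemma W_closed:
  assumes "(f1, g1) \<in> carrier W" "(f2, g2) \<in> carrier W"
  shows "(f1, g1) \<otimes>\<^bsub>W\<^esub> (f2, g2) \<in> carrier W"
proof -
  have fin: "finite ({x \<in> carrier G. f1 x \<noteq> \<one>\<^bsub>H\<^esub>} \<union> (\<lambda>y. g1 \<otimes>\<^bsub>G\<^esub> y) ` {y \<in> carrier G. f2 y \<noteq> \<one>\<^bsub>H\<^esub>})"
    using assms by (simp add: W_carrier)
  have sub: "{x \<in> carrier G. f1 x \<otimes>\<^bsub>H\<^esub> f2 (inv\<^bsub>G\<^esub> g1 \<otimes>\<^bsub>G\<^esub> x) \<noteq> \<one>\<^bsub>H\<^esub>}
     \<subseteq> {x \<in> carrier G. f1 x \<noteq> \<one>\<^bsub>H\<^esub>} \<union> (\<lambda>y. g1 \<otimes>\<^bsub>G\<^esub> y) ` {y \<in> carrier G. f2 y \<noteq> \<one>\<^bsub>H\<^esub>}"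
  proof
    fix x assume x: "x \<in> {x \<in> carrier G. f1 x \<otimes>\<^bsub>H\<^esub> f2 (inv\<^bsub>G\<^esub> g1 \<otimes>\<^bsub>G\<^esub> x) \<noteq> \<one>\<^bsub>H\<^esub>}"
    show "x \<in> {x \<in> carrier G. f1 x \<noteq> \<one>\<^bsub>H\<^esub>} \<union> (\<lambda>y. g1 \<otimes>\<^bsub>G\<^esub> y) ` {y \<in> carrier G. f2 y \<noteq> \<one>\<^bsub>H\<^esub>}"
    proof (cases "f1 x = \<one>\<^bsub>H\<^esub>")
      case True
      have g1: "g1 \<in> carrier G" using assms by (simp add: W_carrier)
      have "x = g1 \<otimes>\<^bsub>G\<^esub> (inv\<^bsub>G\<^esub> g1 \<otimes>\<^bsub>G\<^esub> x)" using x g1 by (simp add: G.m_assoc[symmetric])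
      moreover have "f2 (inv\<^bsub>G\<^esub> g1 \<otimes>\<^bsub>G\<^esub> x) \<noteq> \<one>\<^bsub>H\<^esub>" using x True assms
        by (auto simp: W_carrier)
      ultimately show ?thesis using x g1 by blast
    qed (use x in auto)
  qed
  have "{x \<in> carrier G. (if x \<in> carrier G then f1 x \<otimes>\<^bsub>H\<^esub> f2 (inv\<^bsub>G\<^esub> g1 \<otimes>\<^bsub>G\<^esub> x) else \<one>\<^bsub>H\<^esub>) \<noteq> \<one>\<^bsub>H\<^esub>}
     = {x \<in> carrier G. f1 x \<otimes>\<^bsub>H\<^esub> f2 (inv\<^bsub>G\<^esub> g1 \<otimes>\<^bsub>G\<^esub> x) \<noteq> \<one>\<^bsub>H\<^esub>}" by auto
  then show ?thesis using assms finite_subset[OF sub fin]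
    unfolding W_mult W_carrier by auto
qed

lemma W_assoc:
  assumes "(f1, g1) \<in> carrier W" "(f2, g2) \<in> carrier W" "(f3, g3) \<in> carrier W"
  shows "((f1, g1) \<otimes>\<^bsub>W\<^esub> (f2, g2)) \<otimes>\<^bsub>W\<^esub> (f3, g3) = (f1, g1) \<otimes>\<^bsub>W\<^esub> ((f2, g2) \<otimes>\<^bsub>W\<^esub> (f3, g3))"
proof -
  have g: "g1 \<in> carrier G" "g2 \<in> carrier G" "g3 \<in> carrier G" using assms by (auto simp: W_carrier)
  have e: "inv\<^bsub>G\<^esub> (g1 \<otimes>\<^bsub>G\<^esub> g2) \<otimes>\<^bsub>G\<^esub> x = inv\<^bsub>G\<^esub> g2 \<otimes>\<^bsub>G\<^esub> (inv\<^bsub>G\<^esub> g1 \<otimes>\<^bsub>G\<^esub> x)"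
    if "x \<in> carrier G" for x using g that by (simp add: G.inv_mult_group G.m_assoc)
  have h: "f1 x \<in> carrier H" "f2 y \<in> carrier H" "f3 z \<in> carrier H" for x y z
    using assms by (auto simp: W_carrier)
  show ?thesis using g
    by (auto simp: W_mult e H.m_assoc h G.m_assoc intro!: ext)
qed

lemma W_inv_in:
  assumes "(f, g) \<in> carrier W"
  shows "((\<lambda>x. if x \<in> carrier G then inv\<^bsub>H\<^esub> f (g \<otimes>\<^bsub>G\<^esub> x) else \<one>\<^bsub>H\<^esub>), inv\<^bsub>G\<^esub> g) \<in> carrier W"
proof -
  have g: "g \<in> carrier G" using assms by (simp add: W_carrier)
  have sub: "{x \<in> carrier G. (if x \<in> carrier G then inv\<^bsub>H\<^esub> f (g \<otimes>\<^bsub>G\<^esub> x) else \<one>\<^bsub>H\<^esub>) \<noteq> \<one>\<^bsub>H\<^esub>}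
     \<subseteq> (\<lambda>y. inv\<^bsub>G\<^esub> g \<otimes>\<^bsub>G\<^esub> y) ` {y \<in> carrier G. f y \<noteq> \<one>\<^bsub>H\<^esub>}"
  proof
    fix x assume x: "x \<in> {x \<in> carrier G. (if x \<in> carrier G then inv\<^bsub>H\<^esub> f (g \<otimes>\<^bsub>G\<^esub> x) else \<one>\<^bsub>H\<^esub>) \<noteq> \<one>\<^bsub>H\<^esub>}"
    then have "f (g \<otimes>\<^bsub>G\<^esub> x) \<noteq> \<one>\<^bsub>H\<^esub>" by auto
    moreover have "x = inv\<^bsub>G\<^esub> g \<otimes>\<^bsub>G\<^esub> (g \<otimes>\<^bsub>G\<^esub> x)" using x g by (simp add: G.m_assoc[symmetric])
    ultimately show "x \<in> (\<lambda>y. inv\<^bsub>G\<^esub> g \<otimes>\<^bsub>G\<^esub> y) ` {y \<in> carrier G. f y \<noteq> \<one>\<^bsub>H\<^esub>}"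
      using x g by blast
  qed
  have fin: "finite {y \<in> carrier G. f y \<noteq> \<one>\<^bsub>H\<^esub>}" using assms by (simp add: W_carrier)
  show ?thesis using finite_subset[OF sub finite_imageI[OF fin]] assms g
    by (auto simp: W_carrier)
qed

lemma W_group: "group W"
proof (rule groupI)
  fix x y assume "x \<in> carrier W" "y \<in> carrier W"
  then show "x \<otimes>\<^bsub>W\<^esub> y \<in> carrier W" using W_closed by (cases x, cases y) auto
next
  show "\<one>\<^bsub>W\<^esub> \<in> carrier W" by (simp add: W_one W_carrier)
next
  fix x y z assume "x \<in> carrier W" "y \<in> carrier W" "z \<in> carrier W"
  then show "x \<otimes>\<^bsub>W\<^esub> y \<otimes>\<^bsub>W\<^esub> z = x \<otimes>\<^bsub>W\<^esub> (y \<otimes>\<^bsub>W\<^esub> z)"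
    using W_assoc by (cases x, cases y, cases z) auto
next
  fix x assume x: "x \<in> carrier W"
  obtain f g where fg: "x = (f, g)" by (cases x)
  have g: "g \<in> carrier G" using x fg by (simp add: W_carrier)
  have fc: "f y \<in> carrier H" for y using x fg by (auto simp: W_carrier)
  have fo: "y \<notin> carrier G \<Longrightarrow> f y = \<one>\<^bsub>H\<^esub>" for y using x fg by (auto simp: W_carrier)
  show "\<one>\<^bsub>W\<^esub> \<otimes>\<^bsub>W\<^esub> x = x" using fg g fc fo by (auto simp: W_one W_mult intro!: ext)
  show "\<exists>y\<in>carrier W. y \<otimes>\<^bsub>W\<^esub> x = \<one>\<^bsub>W\<^esub>"
    unfolding fg apply (rule bexI[OF _ W_inv_in[OF x[unfolded fg]]])
    using g fc by (auto simp: W_one W_mult G.m_assoc[symmetric] intro!: ext)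
qed

sublocale W: group W by (rule W_group)

lemma W_inv: assumes "(f, g) \<in> carrier W"
  shows "inv\<^bsub>W\<^esub> (f, g) = ((\<lambda>x. if x \<in> carrier G then inv\<^bsub>H\<^esub> f (g \<otimes>\<^bsub>G\<^esub> x) else \<one>\<^bsub>H\<^esub>), inv\<^bsub>G\<^esub> g)"
proof (rule W.inv_equality[OF _ assms W_inv_in[OF assms]])
  have g: "g \<in> carrier G" using assms by (simp add: W_carrier)
  have fc: "f y \<in> carrier H" for y using assms by (auto simp: W_carrier)
  show "((\<lambda>x. if x \<in> carrier G then inv\<^bsub>H\<^esub> f (g \<otimes>\<^bsub>G\<^esub> x) else \<one>\<^bsub>H\<^esub>), inv\<^bsub>G\<^esub> g) \<otimes>\<^bsub>W\<^esub> (f, g) = \<one>\<^bsub>W\<^esub>"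
    using g fc by (auto simp: W_one W_mult G.m_assoc[symmetric] intro!: ext)
qed

end



locale wrS = wrctx G H for G :: "('g,'d) monoid_scheme" and H :: "('h,'c) monoid_scheme" +
  fixes S assumes S_sub: "S \<subseteq> carrier G" and S_gen: "generate G S = carrier G"
begin

abbreviation "gw \<equiv> wreath_gens H G S"

lemma wr_top_in: "g \<in> carrier G \<Longrightarrow> wr_top H g \<in> carrier W"
  by (simp add: wr_top_def W_carrier)

lemma wr_base_in: "c \<in> carrier H \<Longrightarrow> wr_base H G c \<in> carrier W"
proof -
  assume c: "c \<in> carrier H"
  have "{x \<in> carrier G. (if x = \<one>\<^bsub>G\<^esub> then c else \<one>\<^bsub>H\<^esub>) \<noteq> \<one>\<^bsub>H\<^esub>} \<subseteq> {\<one>\<^bsub>G\<^esub>}" by auto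
  then have "finite {x \<in> carrier G. (if x = \<one>\<^bsub>G\<^esub> then c else \<one>\<^bsub>H\<^esub>) \<noteq> \<one>\<^bsub>H\<^esub>}"
    using finite_subset by blast
  then show ?thesis using c by (simp add: wr_base_def W_carrier)
qed

lemma gw_sub: "gw \<subseteq> carrier W"
  using S_sub wr_top_in wr_base_in by (auto simp: wreath_gens_def)

sublocale GW: gword G S by unfold_locales (rule S_sub)
sublocale WW: gword W gw by unfold_locales (rule gw_sub)

lemma wr_top_mult: "g1 \<in> carrier G \<Longrightarrow> g2 \<in> carrier G \<Longrightarrow>
   wr_top H g1 \<otimes>\<^bsub>W\<^esub> wr_top H g2 = wr_top H (g1 \<otimes>\<^bsub>G\<^esub> g2)"
  by (auto simp: wr_top_def W_mult intro!: ext)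

lemma wr_top_one: "wr_top H \<one>\<^bsub>G\<^esub> = \<one>\<^bsub>W\<^esub>"
  by (simp add: wr_top_def W_one)

lemma wr_top_inv: "g \<in> carrier G \<Longrightarrow> inv\<^bsub>W\<^esub> (wr_top H g) = wr_top H (inv\<^bsub>G\<^esub> g)"
  by (rule W.inv_equality) (auto simp: wr_top_mult wr_top_one wr_top_in)

lemma wr_base_one: "wr_base H G \<one>\<^bsub>H\<^esub> = \<one>\<^bsub>W\<^esub>"
  by (auto simp: wr_base_def W_one)

lemma wr_base_mult: "c \<in> carrier H \<Longrightarrow> d \<in> carrier H \<Longrightarrow>
   wr_base H G c \<otimes>\<^bsub>W\<^esub> wr_base H G d = wr_base H G (c \<otimes>\<^bsub>H\<^esub> d)"
  by (auto simp: wr_base_def W_mult intro!: ext)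

lemma wr_base_inv: "c \<in> carrier H \<Longrightarrow> inv\<^bsub>W\<^esub> (wr_base H G c) = wr_base H G (inv\<^bsub>H\<^esub> c)"
  by (rule W.inv_equality) (auto simp: wr_base_mult wr_base_one wr_base_in)

lemma gens_cases:
  assumes "e \<in> gw \<union> m_inv W ` gw"
  shows "(\<exists>c\<in>carrier H. e = wr_base H G c) \<or> (\<exists>s \<in> S \<union> m_inv G ` S. e = wr_top H s)"
proof -
  consider (b) c where "c \<in> carrier H" "e = wr_base H G c" | (t) s where "s \<in> S" "e = wr_top H s"
    | (ib) c where "c \<in> carrier H" "e = inv\<^bsub>W\<^esub> (wr_base H G c)"
    | (it) s where "s \<in> S" "e = inv\<^bsub>W\<^esub> (wr_top H s)"
    using assms unfolding wreath_gens_def by blast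
  then show ?thesis
  proof cases
    case b then show ?thesis by blast
  next
    case t then show ?thesis by blast
  next
    case ib then show ?thesis using wr_base_inv by auto
  next
    case it
    then have "e = wr_top H (inv\<^bsub>G\<^esub> s)" using wr_top_inv S_sub by auto
    then show ?thesis using it by blast
  qed
qed

lemma top_gen: "s \<in> S \<union> m_inv G ` S \<Longrightarrow> wr_top H s \<in> gw \<union> m_inv W ` gw"
proof -
  assume "s \<in> S \<union> m_inv G ` S"
  then consider "s \<in> S" | s' where "s' \<in> S" "s = inv\<^bsub>G\<^esub> s'" by blast
  then show ?thesis
  proof cases
    case 1 then show ?thesis unfolding wreath_gens_def by blast
  next
    case 2
    then have "wr_top H s = inv\<^bsub>W\<^esub> (wr_top H s')" using wr_top_inv S_sub by auto
    moreover have "wr_top H s' \<in> gw" using 2 unfolding wreath_gens_def by blast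
    ultimately show ?thesis by blast
  qed
qed

lemma foldr_top: "set ws \<subseteq> carrier G \<Longrightarrow>
  foldr (\<lambda>a b. a \<otimes>\<^bsub>W\<^esub> b) (map (wr_top H) ws) \<one>\<^bsub>W\<^esub> = wr_top H (foldr (\<lambda>a b. a \<otimes>\<^bsub>G\<^esub> b) ws \<one>\<^bsub>G\<^esub>)"
  by (induction ws) (auto simp: wr_top_one wr_top_mult GW.foldr_closed)

lemma reach_top: "reach G S n g \<Longrightarrow> reach W gw n (wr_top H g)"
proof -
  assume "reach G S n g"
  then obtain ws where ws: "length ws \<le> n" "set ws \<subseteq> S \<union> m_inv G ` S" "foldr (\<lambda>a b. a \<otimes>\<^bsub>G\<^esub> b) ws \<one>\<^bsub>G\<^esub> = g"
    unfolding reach_def by blast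
  show ?thesis unfolding reach_def
    apply (intro exI[of _ "map (wr_top H) ws"])
  proof (intro conjI)
    show "set (map (wr_top H) ws) \<subseteq> gw \<union> m_inv W ` gw"
      using ws(2) top_gen by (induction ws) auto
  qed (use ws foldr_top[of ws] GW.gens_carrier in auto)
qed

lemma reach_base: "c \<in> carrier H \<Longrightarrow> reach W gw 1 (wr_base H G c)"
proof (cases "c = \<one>\<^bsub>H\<^esub>")
  case True then show ?thesis using WW.reach_one WW.reach_mono by (simp add: wr_base_one) blast
next
  case False
  assume "c \<in> carrier H"
  then have "wr_base H G c \<in> gw" using False by (auto simp: wreath_gens_def)
  then show ?thesis using WW.reach_gen by blast
qed

lemma G_reach: "g \<in> carrier G \<Longrightarrow> reach G S (word_len G S g) g"
  using GW.generate_reach GW.reach_word_len S_gen by blast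

end



definition supp :: "('h,'c) monoid_scheme \<Rightarrow> ('g,'d) monoid_scheme \<Rightarrow> ('g \<Rightarrow> 'h) \<times> 'g \<Rightarrow> 'g set" where
  "supp H G p = {z \<in> carrier G. fst p z \<noteq> \<one>\<^bsub>H\<^esub>}"

context wrS
begin

lemma supp_finite: "p \<in> carrier W \<Longrightarrow> finite (supp H G p)"
  by (cases p) (simp add: supp_def W_carrier)

lemma word_props:
  assumes "set ws \<subseteq> gw \<union> m_inv W ` gw"
  shows "foldr (\<lambda>a b. a \<otimes>\<^bsub>W\<^esub> b) ws \<one>\<^bsub>W\<^esub> \<in> carrier W
    \<and> reach G S (length ws) (snd (foldr (\<lambda>a b. a \<otimes>\<^bsub>W\<^esub> b) ws \<one>\<^bsub>W\<^esub>))
    \<and> card (supp H G (foldr (\<lambda>a b. a \<otimes>\<^bsub>W\<^esub> b) ws \<one>\<^bsub>W\<^esub>)) \<le> length ws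
    \<and> (\<forall>z \<in> supp H G (foldr (\<lambda>a b. a \<otimes>\<^bsub>W\<^esub> b) ws \<one>\<^bsub>W\<^esub>). \<exists>m < length ws. reach G S m z)"
  using assms
proof (induction ws)
  case Nil
  then show ?case using GW.reach_one by (simp add: W_one supp_def W_carrier)
next
  case (Cons e ws)
  define q where "q = foldr (\<lambda>a b. a \<otimes>\<^bsub>W\<^esub> b) ws \<one>\<^bsub>W\<^esub>"
  obtain fq gq where qd: "q = (fq, gq)" by (cases q)
  have IH: "q \<in> carrier W" "reach G S (length ws) gq" "card (supp H G q) \<le> length ws"
    "\<And>z. z \<in> supp H G q \<Longrightarrow> \<exists>m < length ws. reach G S m z"
    using Cons unfolding q_def[symmetric] qd by auto
  have e: "e \<in> gw \<union> m_inv W ` gw" using Cons.prems by auto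
  have eW: "e \<in> carrier W" using e WW.gens_carrier by auto
  have pe: "foldr (\<lambda>a b. a \<otimes>\<^bsub>W\<^esub> b) (e # ws) \<one>\<^bsub>W\<^esub> = e \<otimes>\<^bsub>W\<^esub> q" by (simp add: q_def)
  have pW: "e \<otimes>\<^bsub>W\<^esub> q \<in> carrier W" using eW IH(1) by simp
  have fqc: "fq x \<in> carrier H" for x using IH(1) qd by (auto simp: W_carrier)
  have gq: "gq \<in> carrier G" using IH(1) qd by (auto simp: W_carrier)
  have fin: "finite (supp H G q)" using supp_finite IH(1) by blast
  consider (b) c where "c \<in> carrier H" "e = wr_base H G c" | (t) s where "s \<in> S \<union> m_inv G ` S" "e = wr_top H s"
    using gens_cases[OF e] by blast
  then show ?case
  proof cases
    case b
    have prod: "e \<otimes>\<^bsub>W\<^esub> q = ((\<lambda>x. if x \<in> carrier G then (if x = \<one>\<^bsub>G\<^esub> then c \<otimes>\<^bsub>H\<^esub> fq x else fq x) else \<one>\<^bsub>H\<^esub>), gq)"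
      using b fqc gq by (auto simp: qd wr_base_def W_mult intro!: ext)
    have ss: "supp H G (e \<otimes>\<^bsub>W\<^esub> q) \<subseteq> insert \<one>\<^bsub>G\<^esub> (supp H G q)"
      unfolding prod by (auto simp: supp_def qd split: if_splits)
    have "card (supp H G (e \<otimes>\<^bsub>W\<^esub> q)) \<le> card (insert \<one>\<^bsub>G\<^esub> (supp H G q))"
      by (rule card_mono[OF _ ss]) (use fin in simp)
    also have "\<dots> \<le> Suc (card (supp H G q))" by (simp add: card_insert_le_m1 fin card_insert_if)
    finally have c1: "card (supp H G (e \<otimes>\<^bsub>W\<^esub> q)) \<le> length (e # ws)" using IH(3) by simp
    have c2: "\<exists>m < length (e # ws). reach G S m z" if "z \<in> supp H G (e \<otimes>\<^bsub>W\<^esub> q)" for z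
    proof (cases "z = \<one>\<^bsub>G\<^esub>")
      case True then show ?thesis using GW.reach_one by auto
    next
      case False then have "z \<in> supp H G q" using ss that by auto
      then obtain m where "m < length ws" "reach G S m z" using IH(4) by blast
      then show ?thesis by (intro exI[of _ m]) simp
    qed
    have c3: "reach G S (length (e # ws)) (snd (e \<otimes>\<^bsub>W\<^esub> q))"
      using IH(2) GW.reach_mono by (simp add: prod)
    show ?thesis unfolding pe using pW c1 c2 c3 by blast
  next
    case t
    have s: "s \<in> carrier G" using t GW.gens_carrier by auto
    have prod: "e \<otimes>\<^bsub>W\<^esub> q = ((\<lambda>x. if x \<in> carrier G then fq (inv\<^bsub>G\<^esub> s \<otimes>\<^bsub>G\<^esub> x) else \<one>\<^bsub>H\<^esub>), s \<otimes>\<^bsub>G\<^esub> gq)"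
      using t fqc by (auto simp: qd wr_top_def W_mult intro!: ext)
    have ss: "supp H G (e \<otimes>\<^bsub>W\<^esub> q) \<subseteq> (\<lambda>y. s \<otimes>\<^bsub>G\<^esub> y) ` (supp H G q)"
    proof
      fix z assume z: "z \<in> supp H G (e \<otimes>\<^bsub>W\<^esub> q)"
      then have zc: "z \<in> carrier G" and "fq (inv\<^bsub>G\<^esub> s \<otimes>\<^bsub>G\<^esub> z) \<noteq> \<one>\<^bsub>H\<^esub>" by (auto simp: supp_def prod)
      then have "inv\<^bsub>G\<^esub> s \<otimes>\<^bsub>G\<^esub> z \<in> supp H G q" using s by (simp add: supp_def qd)
      moreover have "z = s \<otimes>\<^bsub>G\<^esub> (inv\<^bsub>G\<^esub> s \<otimes>\<^bsub>G\<^esub> z)" using s zc by (simp add: G.m_assoc[symmetric])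
      ultimately show "z \<in> (\<lambda>y. s \<otimes>\<^bsub>G\<^esub> y) ` (supp H G q)" by blast
    qed
    have "card (supp H G (e \<otimes>\<^bsub>W\<^esub> q)) \<le> card ((\<lambda>y. s \<otimes>\<^bsub>G\<^esub> y) ` (supp H G q))"
      by (rule card_mono[OF _ ss]) (use fin in simp)
    also have "\<dots> \<le> card (supp H G q)" by (rule card_image_le[OF fin])
    finally have c1: "card (supp H G (e \<otimes>\<^bsub>W\<^esub> q)) \<le> length (e # ws)" using IH(3) by simp
    have c2: "\<exists>m < length (e # ws). reach G S m z" if zz: "z \<in> supp H G (e \<otimes>\<^bsub>W\<^esub> q)" for z
    proof -
      obtain y where y: "y \<in> supp H G q" "z = s \<otimes>\<^bsub>G\<^esub> y" using ss zz by blast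
      obtain m where m: "m < length ws" "reach G S m y" using IH(4)[OF y(1)] by blast
      have "reach G S (1 + m) z" using GW.reach_mult[OF GW.reach_gen[OF t(1)] m(2)] y by simp
      then show ?thesis using m by (intro exI[of _ "1 + m"]) simp
    qed
    have c3: "reach G S (length (e # ws)) (snd (e \<otimes>\<^bsub>W\<^esub> q))"
      using GW.reach_mult[OF GW.reach_gen[OF t(1)] IH(2)] by (simp add: prod)
    show ?thesis unfolding pe using pW c1 c2 c3 by blast
  qed
qed

lemma reach_props:
  assumes "reach W gw n w"
  shows "reach G S n (snd w)" "card (supp H G w) \<le> n"
    "\<And>z. z \<in> supp H G w \<Longrightarrow> word_len G S z < n"
proof -
  obtain ws where ws: "length ws \<le> n" "set ws \<subseteq> gw \<union> m_inv W ` gw" "foldr (\<lambda>a b. a \<otimes>\<^bsub>W\<^esub> b) ws \<one>\<^bsub>W\<^esub> = w"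
    using assms unfolding reach_def by blast
  note P = word_props[OF ws(2), unfolded ws(3)]
  show "reach G S n (snd w)" using P ws(1) GW.reach_mono by blast
  show "card (supp H G w) \<le> n" using P ws(1) by linarith
  fix z assume "z \<in> supp H G w"
  then obtain m where "m < length ws" "reach G S m z" using P by blast
  then show "word_len G S z < n" using GW.word_len_le ws(1) by fastforce
qed

end



definition flip :: "('h,'c) monoid_scheme \<Rightarrow> ('g,'d) monoid_scheme \<Rightarrow> 'g \<Rightarrow> 'h \<Rightarrow> ('g \<Rightarrow> 'h) \<times> 'g" where
  "flip H G a c = ((\<lambda>x. if x = a then c else \<one>\<^bsub>H\<^esub>), \<one>\<^bsub>G\<^esub>)"

context wrS
begin

lemma inv_eq_one_iff: "a \<in> carrier G \<Longrightarrow> x \<in> carrier G \<Longrightarrow> (inv\<^bsub>G\<^esub> a \<otimes>\<^bsub>G\<^esub> x = \<one>\<^bsub>G\<^esub>) = (x = a)"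
  by (metis G.inv_closed G.inv_equality G.inv_inv G.l_inv)

lemma flip_eq: "a \<in> carrier G \<Longrightarrow> c \<in> carrier H \<Longrightarrow>
  wr_top H a \<otimes>\<^bsub>W\<^esub> wr_base H G c \<otimes>\<^bsub>W\<^esub> wr_top H (inv\<^bsub>G\<^esub> a) = flip H G a c"
  by (auto simp: wr_top_def wr_base_def flip_def W_mult inv_eq_one_iff intro!: ext)

lemma reach_flip: "a \<in> carrier G \<Longrightarrow> c \<in> carrier H \<Longrightarrow>
   reach W gw (2 * word_len G S a + 1) (flip H G a c)"
proof -
  assume a: "a \<in> carrier G" and c: "c \<in> carrier H"
  have r1: "reach W gw (word_len G S a) (wr_top H a)" using reach_top G_reach a by blast
  have r2: "reach W gw (word_len G S a) (wr_top H (inv\<^bsub>G\<^esub> a))"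
    using reach_top GW.reach_inv G_reach a by blast
  have "reach W gw (word_len G S a + 1 + word_len G S a)
     (wr_top H a \<otimes>\<^bsub>W\<^esub> wr_base H G c \<otimes>\<^bsub>W\<^esub> wr_top H (inv\<^bsub>G\<^esub> a))"
    by (rule WW.reach_mult[OF WW.reach_mult[OF r1 reach_base[OF c]] r2])
  then show ?thesis using flip_eq[OF a c] by (simp add: mult_2)
qed

lemma build:
  assumes "finite A"
  shows "A \<subseteq> carrier G \<Longrightarrow> (\<forall>z\<in>A. real (word_len G S z) \<le> \<rho>) \<Longrightarrow> (\<forall>x. h x \<in> carrier H)
    \<Longrightarrow> (\<forall>x. x \<notin> A \<longrightarrow> h x = \<one>\<^bsub>H\<^esub>)
    \<Longrightarrow> \<exists>n. reach W gw n (h, \<one>\<^bsub>G\<^esub>) \<and> real n \<le> real (card A) * (2 * \<rho> + 1)"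
  using assms
proof (induction A arbitrary: h rule: finite_induct)
  case empty
  then have "h = (\<lambda>x. \<one>\<^bsub>H\<^esub>)" by auto
  then show ?case using WW.reach_one by (intro exI[of _ 0]) (simp add: W_one)
next
  case (insert a A)
  define h' where "h' = h(a := \<one>\<^bsub>H\<^esub>)"
  have "\<exists>n. reach W gw n (h', \<one>\<^bsub>G\<^esub>) \<and> real n \<le> real (card A) * (2 * \<rho> + 1)"
    by (rule insert.IH) (use insert.prems in \<open>auto simp: h'_def\<close>)
  then obtain n where n: "reach W gw n (h', \<one>\<^bsub>G\<^esub>)" "real n \<le> real (card A) * (2 * \<rho> + 1)" by blast
  have a: "a \<in> carrier G" using insert.prems by auto
  have ha: "h a \<in> carrier H" using insert.prems by auto
  have out: "\<forall>x. x \<notin> carrier G \<longrightarrow> h x = \<one>\<^bsub>H\<^esub>" using insert.prems by blast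
  have eq: "(h', \<one>\<^bsub>G\<^esub>) \<otimes>\<^bsub>W\<^esub> flip H G a (h a) = (h, \<one>\<^bsub>G\<^esub>)"
    using insert.prems a out by (auto simp: h'_def flip_def W_mult intro!: ext)
  have "reach W gw (n + (2 * word_len G S a + 1)) (h, \<one>\<^bsub>G\<^esub>)"
    using WW.reach_mult[OF n(1) reach_flip[OF a ha]] eq by simp
  moreover have "real (n + (2 * word_len G S a + 1)) \<le> real (card (insert a A)) * (2 * \<rho> + 1)"
  proof -
    have "real (word_len G S a) \<le> \<rho>" using insert.prems by auto
    then show ?thesis using n(2) insert.hyps by (simp add: algebra_simps)
  qed
  ultimately show ?case by blast
qed

lemma top_split: "(f, g) \<in> carrier W \<Longrightarrow> (f, g) = (f, \<one>\<^bsub>G\<^esub>) \<otimes>\<^bsub>W\<^esub> wr_top H g"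
  unfolding W_carrier wr_top_def W_mult by (auto intro!: ext)

lemma fW: "(f, g) \<in> carrier W \<Longrightarrow> f x \<in> carrier H"
  by (cases "x \<in> carrier G") (auto simp: W_carrier)

lemma all_reach: "w \<in> carrier W \<Longrightarrow> reach W gw (word_len W gw w) w"
proof -
  assume w: "w \<in> carrier W"
  obtain f g where fg: "w = (f, g)" by (cases w)
  define A where "A = supp H G w"
  have fin: "finite A" using supp_finite w A_def by blast
  have "\<exists>n. reach W gw n (f, \<one>\<^bsub>G\<^esub>) \<and> real n \<le> real (card A) * (2 * (\<Sum>z\<in>A. real (word_len G S z)) + 1)"
  proof (rule build[OF fin])
    show "A \<subseteq> carrier G" unfolding A_def supp_def by blast
    show "\<forall>z\<in>A. real (word_len G S z) \<le> (\<Sum>z\<in>A. real (word_len G S z))"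
      using fin by (intro ballI member_le_sum) auto
    show "\<forall>x. f x \<in> carrier H" using fW[of f g] w fg by simp
    show "\<forall>x. x \<notin> A \<longrightarrow> f x = \<one>\<^bsub>H\<^esub>" using w unfolding fg A_def supp_def W_carrier by auto
  qed
  then obtain n where n: "reach W gw n (f, \<one>\<^bsub>G\<^esub>)" by blast
  have g: "g \<in> carrier G" using w fg by (simp add: W_carrier)
  have "reach W gw (n + word_len G S g) w"
    using WW.reach_mult[OF n reach_top[OF G_reach[OF g]]] top_split[of f g] w fg by simp
  then show ?thesis using WW.reach_word_len by blast
qed

end



lemma counting:
  fixes B :: "'a set" and c :: "'a set \<Rightarrow> nat" and E :: "nat \<Rightarrow> 'a set \<Rightarrow> 'a set \<Rightarrow> bool"
  assumes finB: "finite B"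
    and cP: "\<And>P. P \<subseteq> B \<Longrightarrow> c P \<le> k"
    and Esub: "\<And>i P Q. E i P Q \<Longrightarrow> P \<subseteq> B \<and> Q \<subseteq> B"
    and Esym: "\<And>i P Q. E i P Q \<Longrightarrow> E i Q P"
    and Etrans: "\<And>i P Q R. E i P Q \<Longrightarrow> E i Q R \<Longrightarrow> E i P R"
    and Eadj: "\<And>P j. P \<subseteq> B \<Longrightarrow> j \<in> B \<Longrightarrow> E (c P) P (P - {j} \<union> ({j} - P))"
    and Erefl: "\<And>P. P \<subseteq> B \<Longrightarrow> E (c P) P P"
    and Edist: "\<And>i P Q. E i P Q \<Longrightarrow> real (card ((P - Q) \<union> (Q - P))) \<le> Dr"
  shows "real (card B) \<le> (real k + 2) * Dr"
proof -
  define sd :: "'a set \<Rightarrow> 'a set \<Rightarrow> 'a set" where "sd P Q = (P - Q) \<union> (Q - P)" for P Q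
  define ref where "ref i P = (SOME z. E i P z)" for i P
  have Dr0: "0 \<le> Dr" using Edist[OF Erefl[of "{}"]] by simp
  have ref_ok: "E i P (ref i P)" if "E i P Q" for i P Q
    unfolding ref_def using that by (rule someI)
  have ref_eq: "ref i P = ref i Q" if "E i P Q" for i P Q
  proof -
    have "(\<lambda>z. E i P z) = (\<lambda>z. E i Q z)"
    proof (rule ext, rule iffI)
      fix z assume "E i P z" then show "E i Q z" using that Esym Etrans by metis
    next
      fix z assume "E i Q z" then show "E i P z" using that Etrans by metis
    qed
    then show ?thesis unfolding ref_def by simp
  qed
  define Pi where "Pi = Sigma (Pow B) (\<lambda>P. B - sd P (ref (c P) P))"
  define F where "F Q i = (if \<exists>z. E i Q z then (\<lambda>j. (sd Q {j}, j)) ` sd Q (ref i Q) else {})" for Q i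
  have finPi: "finite Pi" unfolding Pi_def using finB by auto
  have sdsub: "sd P Q \<subseteq> B" if "P \<subseteq> B" "Q \<subseteq> B" for P Q using that unfolding sd_def by auto
  have finsd: "finite (sd P Q)" if "P \<subseteq> B" "Q \<subseteq> B" for P Q using sdsub[OF that] finB finite_subset by blast
  have low: "real (card (Pow B)) * (real (card B) - Dr) \<le> real (card Pi)"
  proof -
    have "real (card Pi) = (\<Sum>P\<in>Pow B. real (card (B - sd P (ref (c P) P))))"
      unfolding Pi_def using finB by (simp add: card_SigmaI)
    also have "\<dots> \<ge> (\<Sum>P\<in>Pow B. real (card B) - Dr)"
    proof (rule sum_mono)
      fix P assume P: "P \<in> Pow B"
      have PB: "P \<subseteq> B" using P by simp
      have E: "E (c P) P (ref (c P) P)" using ref_ok[OF Erefl[OF PB]] .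
      then have sub: "sd P (ref (c P) P) \<subseteq> B" using Esub[OF E] sdsub by simp
      have fs: "finite (sd P (ref (c P) P))" using sub finB by (rule finite_subset)
      have "card (B - sd P (ref (c P) P)) = card B - card (sd P (ref (c P) P))"
        by (rule card_Diff_subset[OF fs sub])
      moreover have "card (sd P (ref (c P) P)) \<le> card B" using card_mono[OF finB sub] .
      moreover have "real (card (sd P (ref (c P) P))) \<le> Dr" using Edist[OF E] unfolding sd_def .
      ultimately show "real (card B) - Dr \<le> real (card (B - sd P (ref (c P) P)))" by simp
    qed
    finally show ?thesis by simp
  qed
  have cover: "Pi \<subseteq> (\<Union>Qi\<in>Pow B \<times> {..k}. F (fst Qi) (snd Qi))"
  proof
    fix x assume x: "x \<in> Pi"
    obtain P j where xd: "x = (P, j)" by (cases x)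
    have P: "P \<subseteq> B" and j: "j \<in> B" and nj: "j \<notin> sd P (ref (c P) P)" using x xd by (auto simp: Pi_def)
    define Q where "Q = sd P {j}"
    have EPQ: "E (c P) P Q" unfolding Q_def sd_def using Eadj[OF P j] .
    have Q: "Q \<subseteq> B" using Esub EPQ by blast
    have r: "ref (c P) Q = ref (c P) P" using ref_eq[OF EPQ] by simp
    have "j \<in> sd Q (ref (c P) Q)" using nj r unfolding Q_def sd_def by auto
    moreover have "sd Q {j} = P" unfolding Q_def sd_def by auto
    moreover have "\<exists>z. E (c P) Q z" using EPQ Esym by blast
    ultimately have "x \<in> F Q (c P)" unfolding F_def xd by force
    moreover have "(Q, c P) \<in> Pow B \<times> {..k}" using Q cP[OF P] by auto
    ultimately show "x \<in> (\<Union>Qi\<in>Pow B \<times> {..k}. F (fst Qi) (snd Qi))" by force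
  qed
  have Fbound: "real (card (F Q i)) \<le> Dr" if "Q \<subseteq> B" for Q i
  proof (cases "\<exists>z. E i Q z")
    case True
    then have E: "E i Q (ref i Q)" using ref_ok by blast
    have "card (F Q i) \<le> card (sd Q (ref i Q))"
      unfolding F_def using True E Esub finsd by (simp add: card_image_le)
    also have "real (card (sd Q (ref i Q))) \<le> Dr" using Edist[OF E] unfolding sd_def .
    finally show ?thesis by simp
  next
    case False then show ?thesis using Dr0 by (simp add: F_def)
  qed
  have finF: "finite (F Q i)" if "Q \<subseteq> B" for Q i
  proof (cases "\<exists>z. E i Q z")
    case True
    then have E: "E i Q (ref i Q)" using ref_ok by blast
    then show ?thesis unfolding F_def using True Esub finsd by simp
  qed (simp add: F_def)
  have "card Pi \<le> card (\<Union>Qi\<in>Pow B \<times> {..k}. F (fst Qi) (snd Qi))"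
    by (rule card_mono[OF _ cover]) (use finB finF in auto)
  also have "\<dots> \<le> (\<Sum>Qi\<in>Pow B \<times> {..k}. card (F (fst Qi) (snd Qi)))"
    by (rule card_UN_le) (use finB in auto)
  finally have "real (card Pi) \<le> (\<Sum>Qi\<in>Pow B \<times> {..k}. real (card (F (fst Qi) (snd Qi))))"
    by (metis of_nat_le_iff of_nat_sum)
  also have "\<dots> \<le> (\<Sum>Qi\<in>Pow B \<times> {..k}. Dr)"
    by (rule sum_mono) (use Fbound in auto)
  also have "\<dots> = real (card (Pow B)) * (real k + 1) * Dr"
    using finB by (simp add: card_cartesian_product algebra_simps)
  finally have up: "real (card Pi) \<le> real (card (Pow B)) * (real k + 1) * Dr" .
  have pos: "0 < real (card (Pow B))" using finB by (simp add: card_Pow)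
  from low up have "real (card (Pow B)) * (real (card B) - Dr) \<le> real (card (Pow B)) * ((real k + 1) * Dr)"
    by (simp add: mult.assoc)
  then have "real (card B) - Dr \<le> (real k + 1) * Dr" using pos by simp
  then show ?thesis by (simp add: algebra_simps)
qed




context wrS
begin

lemma W_invmult:
  assumes "(f, g) \<in> carrier W" "(f', g') \<in> carrier W"
  shows "inv\<^bsub>W\<^esub> (f, g) \<otimes>\<^bsub>W\<^esub> (f', g') =
    ((\<lambda>z. if z \<in> carrier G then inv\<^bsub>H\<^esub> f (g \<otimes>\<^bsub>G\<^esub> z) \<otimes>\<^bsub>H\<^esub> f' (g \<otimes>\<^bsub>G\<^esub> z) else \<one>\<^bsub>H\<^esub>),
     inv\<^bsub>G\<^esub> g \<otimes>\<^bsub>G\<^esub> g')"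
proof -
  have g: "g \<in> carrier G" using assms by (simp add: W_carrier)
  show ?thesis unfolding W_inv[OF assms(1)] W_mult using g by (auto intro!: ext)
qed

lemma ball_finite:
  assumes "finite S"
  shows "finite {g \<in> carrier G. real (word_len G S g) < t}"
proof -
  define n where "n = nat \<lceil>t\<rceil>"
  have "{g \<in> carrier G. real (word_len G S g) < t} \<subseteq>
      (\<lambda>ws. foldr (\<lambda>a b. a \<otimes>\<^bsub>G\<^esub> b) ws \<one>\<^bsub>G\<^esub>) ` {ws. set ws \<subseteq> S \<union> m_inv G ` S \<and> length ws \<le> n}"
  proof
    fix g assume g: "g \<in> {g \<in> carrier G. real (word_len G S g) < t}"
    then have "reach G S (word_len G S g) g" using G_reach by blast
    then obtain ws where ws: "length ws \<le> word_len G S g" "set ws \<subseteq> S \<union> m_inv G ` S"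
        "foldr (\<lambda>a b. a \<otimes>\<^bsub>G\<^esub> b) ws \<one>\<^bsub>G\<^esub> = g"
      unfolding reach_def by blast
    have "real (word_len G S g) \<le> t" using g by simp
    then have "\<lceil>real (word_len G S g)\<rceil> \<le> \<lceil>t\<rceil>" by (rule ceiling_mono)
    then have "nat (int (word_len G S g)) \<le> nat \<lceil>t\<rceil>" by (intro nat_mono) simp
    then have "word_len G S g \<le> n" unfolding n_def by simp
    then show "g \<in> (\<lambda>ws. foldr (\<lambda>a b. a \<otimes>\<^bsub>G\<^esub> b) ws \<one>\<^bsub>G\<^esub>) ` {ws. set ws \<subseteq> S \<union> m_inv G ` S \<and> length ws \<le> n}"
      using ws by force
  qed
  moreover have "finite {ws. set ws \<subseteq> S \<union> m_inv G ` S \<and> length ws \<le> n}"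
    by (rule finite_lists_length_le) (use assms in simp)
  ultimately show ?thesis using finite_subset by blast
qed

lemma dist_supp:
  assumes "x \<in> carrier W" "y \<in> carrier W"
  shows "card (supp H G (inv\<^bsub>W\<^esub> x \<otimes>\<^bsub>W\<^esub> y)) \<le> word_len W gw (inv\<^bsub>W\<^esub> x \<otimes>\<^bsub>W\<^esub> y)"
  using reach_props(2)[OF all_reach] assms by simp

end

locale wrL = wrS G H S for G :: "('g,'d) monoid_scheme" and H :: "('h,'c) monoid_scheme" and S +
  fixes h0 assumes h0: "h0 \<in> carrier H" "h0 \<noteq> \<one>\<^bsub>H\<^esub>" and finS: "finite S"
begin

definition xP :: "'g set \<Rightarrow> ('g \<Rightarrow> 'h) \<times> 'g" where
  "xP P = ((\<lambda>z. if z \<in> P then h0 else \<one>\<^bsub>H\<^esub>), \<one>\<^bsub>G\<^esub>)"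

lemma xP_in: "P \<subseteq> carrier G \<Longrightarrow> finite P \<Longrightarrow> xP P \<in> carrier W"
proof -
  assume P: "P \<subseteq> carrier G" "finite P"
  have "{x \<in> carrier G. (if x \<in> P then h0 else \<one>\<^bsub>H\<^esub>) \<noteq> \<one>\<^bsub>H\<^esub>} \<subseteq> P" by auto
  then have "finite {x \<in> carrier G. (if x \<in> P then h0 else \<one>\<^bsub>H\<^esub>) \<noteq> \<one>\<^bsub>H\<^esub>}" using P finite_subset by blast
  then show ?thesis using P h0 unfolding xP_def W_carrier by auto
qed

lemma xP_diff:
  assumes "P \<subseteq> carrier G" "finite P" "Q \<subseteq> carrier G" "finite Q"
  shows "inv\<^bsub>W\<^esub> (xP P) \<otimes>\<^bsub>W\<^esub> xP Q =
    ((\<lambda>z. if z \<in> carrier G \<and> (z \<in> P \<longleftrightarrow> z \<notin> Q) then (if z \<in> P then inv\<^bsub>H\<^esub> h0 else h0) else \<one>\<^bsub>H\<^esub>), \<one>\<^bsub>G\<^esub>)"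
proof -
  have "inv\<^bsub>W\<^esub> (xP P) \<otimes>\<^bsub>W\<^esub> xP Q =
    ((\<lambda>z. if z \<in> carrier G then inv\<^bsub>H\<^esub> (if z \<in> P then h0 else \<one>\<^bsub>H\<^esub>) \<otimes>\<^bsub>H\<^esub> (if z \<in> Q then h0 else \<one>\<^bsub>H\<^esub>) else \<one>\<^bsub>H\<^esub>),
     \<one>\<^bsub>G\<^esub>)"
    unfolding xP_def
    by (subst W_invmult[OF xP_in[OF assms(1,2), unfolded xP_def] xP_in[OF assms(3,4), unfolded xP_def]])
       (auto intro!: ext)
  also have "\<dots> = ((\<lambda>z. if z \<in> carrier G \<and> (z \<in> P \<longleftrightarrow> z \<notin> Q) then (if z \<in> P then inv\<^bsub>H\<^esub> h0 else h0) else \<one>\<^bsub>H\<^esub>), \<one>\<^bsub>G\<^esub>)"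
    using h0 by (intro arg_cong2[where f=Pair] ext refl) simp
  finally show ?thesis .
qed

lemma xP_card:
  assumes "P \<subseteq> carrier G" "finite P" "Q \<subseteq> carrier G" "finite Q"
  shows "real (card ((P - Q) \<union> (Q - P))) \<le> word_dist W gw (xP P) (xP Q)"
proof -
  have hi: "inv\<^bsub>H\<^esub> h0 \<noteq> \<one>\<^bsub>H\<^esub>" using h0 by (metis H.inv_inv H.inv_one)
  have "supp H G (inv\<^bsub>W\<^esub> (xP P) \<otimes>\<^bsub>W\<^esub> xP Q) = (P - Q) \<union> (Q - P)"
    unfolding xP_diff[OF assms] supp_def fst_conv using assms h0 hi by auto
  then show ?thesis using dist_supp[OF xP_in[OF assms(1,2)] xP_in[OF assms(3,4)]]
    unfolding word_dist_def by simp
qed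

lemma xP_adj:
  assumes "P \<subseteq> carrier G" "finite P" "j \<in> carrier G"
  shows "word_dist W gw (xP P) (xP (P - {j} \<union> ({j} - P))) \<le> 2 * real (word_len G S j) + 1"
proof -
  define Q where "Q = P - {j} \<union> ({j} - P)"
  have Q: "Q \<subseteq> carrier G" "finite Q" using assms by (auto simp: Q_def)
  have "inv\<^bsub>W\<^esub> (xP P) \<otimes>\<^bsub>W\<^esub> xP Q = flip H G j (if j \<in> P then inv\<^bsub>H\<^esub> h0 else h0)"
    unfolding xP_diff[OF assms(1,2) Q] flip_def using assms
    by (intro arg_cong2[where f=Pair] ext refl) (auto simp: Q_def)
  moreover have "(if j \<in> P then inv\<^bsub>H\<^esub> h0 else h0) \<in> carrier H" using h0 by auto
  ultimately have "reach W gw (2 * word_len G S j + 1) (inv\<^bsub>W\<^esub> (xP P) \<otimes>\<^bsub>W\<^esub> xP Q)"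
    using reach_flip assms(3) by simp
  then have wl: "word_len W gw (inv\<^bsub>W\<^esub> (xP P) \<otimes>\<^bsub>W\<^esub> xP Q) \<le> 2 * word_len G S j + 1"
    by (rule WW.word_len_le)
  show ?thesis unfolding word_dist_def Q_def[symmetric]
    using of_nat_mono[OF wl, where 'a=real] by simp
qed

end



context wrL
begin

lemma word_dist_self: "x \<in> carrier W \<Longrightarrow> word_dist W gw x x = 0"
  unfolding word_dist_def by (simp add: WW.word_len_one)

lemma lower:
  assumes cf: "control_function (carrier W) (word_dist W gw) k D"
  shows "weakly_dominates D (\<lambda>t. ereal (real (growth G S t)))"
proof -
  define d where "d = word_dist W gw"
  have key: "ereal (real (growth G S t)) \<le> ereal (real k + 2) * D ((real k + 2) * t + (real k + 2)) + ereal (real k + 2)"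
    if t: "t \<ge> 0" for t
  proof -
    define r where "r = (real k + 2) * t + (real k + 2)"
    have r0: "r > 0" unfolding r_def using t by (smt (verit) mult_nonneg_nonneg of_nat_0_le_iff)
    have "2 * t \<le> (real k + 2) * t" using t by (intro mult_right_mono) auto
    then have r2: "2 * t + 1 < r" unfolding r_def by simp
    have cf2: "\<forall>r>0. \<exists>U :: nat \<Rightarrow> (('g \<Rightarrow> 'h) \<times> 'g) set.
        (\<forall>i\<le>k. U i \<subseteq> carrier W) \<and> carrier W \<subseteq> (\<Union>i\<le>k. U i) \<and>
        (\<forall>x\<in>carrier W. \<exists>i\<le>k. open_ball_in (carrier W) d x r \<subseteq> U i) \<and>
        (\<forall>i\<le>k. \<forall>x y. same_r_component (U i) d r x y \<longrightarrow> ereal (d x y) \<le> D r)"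
      and cf1: "\<forall>t\<ge>0. 0 \<le> D t"
      using cf unfolding control_function_def d_def by (blast, blast)
    obtain U where U1: "\<forall>i\<le>k. U i \<subseteq> carrier W"
      and U3: "\<forall>x\<in>carrier W. \<exists>i\<le>k. open_ball_in (carrier W) d x r \<subseteq> U i"
      and U4: "\<forall>i\<le>k. \<forall>x y. same_r_component (U i) d r x y \<longrightarrow> ereal (d x y) \<le> D r"
      using cf2[rule_format, OF r0] by (elim exE conjE) (rule that)
    have D0: "0 \<le> D r" using cf1 r0 by simp
    show ?thesis
    proof (cases "D r")
      case PInf
      then show ?thesis unfolding r_def[symmetric] by simp
    next
      case MInf
      then show ?thesis using D0 by simp
    next
      case (real Dr)
      define B where "B = {g \<in> carrier G. real (word_len G S g) < t}"
      have finB: "finite B" unfolding B_def by (rule ball_finite[OF finS])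
      have BG: "B \<subseteq> carrier G" unfolding B_def by blast
      have sB: "P \<subseteq> carrier G" "finite P" if "P \<subseteq> B" for P
        using that BG finB finite_subset by blast+
      define c where "c P = (SOME i. i \<le> k \<and> open_ball_in (carrier W) d (xP P) r \<subseteq> U i)" for P
      have cP: "c P \<le> k \<and> open_ball_in (carrier W) d (xP P) r \<subseteq> U (c P)" if "P \<subseteq> B" for P
      proof -
        have "\<exists>i. i \<le> k \<and> open_ball_in (carrier W) d (xP P) r \<subseteq> U i"
          using U3 xP_in[OF sB[OF that]] by blast
        then show ?thesis unfolding c_def by (rule someI_ex)
      qed
      define E where "E i P Q = (i \<le> k \<and> P \<subseteq> B \<and> Q \<subseteq> B \<and> same_r_component (U i) d r (xP P) (xP Q)
           \<and> same_r_component (U i) d r (xP Q) (xP P))" for i P Q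
      have inU: "xP Q \<in> U (c P)" if "P \<subseteq> B" "Q \<subseteq> B" "d (xP P) (xP Q) < r" for P Q
        using cP[OF that(1)] xP_in[OF sB[OF that(2)]] that(3) unfolding open_ball_in_def by blast
      have self: "xP P \<in> U (c P)" if "P \<subseteq> B" for P
        using inU[OF that that] word_dist_self[OF xP_in[OF sB[OF that]]] r0 unfolding d_def by simp
      have adjd: "d (xP P) (xP (P - {j} \<union> ({j} - P))) < r" if "P \<subseteq> B" "j \<in> B" for P j
      proof -
        have "d (xP P) (xP (P - {j} \<union> ({j} - P))) \<le> 2 * real (word_len G S j) + 1"
          unfolding d_def by (rule xP_adj[OF sB[OF that(1)]]) (use that BG in auto)
        moreover have "real (word_len G S j) < t" using that(2) unfolding B_def by simp
        ultimately show ?thesis using r2 by linarith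
      qed
      have card_le: "real (card B) \<le> (real k + 2) * Dr"
      proof (rule counting[OF finB, of c k E])
        show "\<And>P. P \<subseteq> B \<Longrightarrow> c P \<le> k" using cP by blast
        show "\<And>i P Q. E i P Q \<Longrightarrow> P \<subseteq> B \<and> Q \<subseteq> B" unfolding E_def by blast
        show "\<And>i P Q. E i P Q \<Longrightarrow> E i Q P" unfolding E_def by blast
        show "\<And>i P Q R. E i P Q \<Longrightarrow> E i Q R \<Longrightarrow> E i P R"
          unfolding E_def same_r_component_def by (meson rtranclp_trans)
        show "\<And>P. P \<subseteq> B \<Longrightarrow> E (c P) P P"
          unfolding E_def same_r_component_def using cP self by blast
        show "E (c P) P (P - {j} \<union> ({j} - P))" if P: "P \<subseteq> B" and j: "j \<in> B" for P j
        proof -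
          define Q where "Q = P - {j} \<union> ({j} - P)"
          have Q: "Q \<subseteq> B" unfolding Q_def using P j by auto
          have QP: "Q - {j} \<union> ({j} - Q) = P" unfolding Q_def by auto
          have d1: "d (xP P) (xP Q) < r" unfolding Q_def by (rule adjd[OF P j])
          have d2: "d (xP Q) (xP P) < r" using adjd[OF Q j] QP by simp
          have u1: "xP P \<in> U (c P)" by (rule self[OF P])
          have u2: "xP Q \<in> U (c P)" by (rule inU[OF P Q d1])
          have "same_r_component (U (c P)) d r (xP P) (xP Q)"
            unfolding same_r_component_def using u1 u2 d1 by (auto intro: r_into_rtranclp)
          moreover have "same_r_component (U (c P)) d r (xP Q) (xP P)"
            unfolding same_r_component_def using u1 u2 d2 by (auto intro: r_into_rtranclp)
          ultimately show ?thesis unfolding E_def Q_def[symmetric] using cP[OF P] P Q by blast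
        qed
        show "real (card ((P - Q) \<union> (Q - P))) \<le> Dr" if EPQ: "E i P Q" for i P Q
        proof -
          have "ereal (d (xP P) (xP Q)) \<le> D r" using U4 EPQ unfolding E_def by blast
          then have "d (xP P) (xP Q) \<le> Dr" using real by simp
          moreover have "P \<subseteq> B" "Q \<subseteq> B" using EPQ unfolding E_def by auto
          ultimately show ?thesis using xP_card[OF sB[of P] sB[of Q]] unfolding d_def by fastforce
        qed
      qed
      have "growth G S t = card B" unfolding growth_def B_def by simp
      then have "real (growth G S t) \<le> (real k + 2) * Dr + (real k + 2)" using card_le by simp
      then show ?thesis using real unfolding r_def[symmetric] by simp
    qed
  qed
  show ?thesis unfolding weakly_dominates_def
    by (rule exI[of _ "real k + 2"], rule exI[of _ "real k + 2"]) (use key in auto)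
qed

end



context wrL
begin

lemma proj_lamp:
  assumes y: "y \<in> carrier W" and z: "z \<in> carrier W"
  shows "word_len G S (inv\<^bsub>G\<^esub> (snd y) \<otimes>\<^bsub>G\<^esub> snd z) \<le> word_len W gw (inv\<^bsub>W\<^esub> y \<otimes>\<^bsub>W\<^esub> z)"
    and "p \<in> carrier G \<Longrightarrow> fst y p \<noteq> fst z p \<Longrightarrow>
          word_len G S (inv\<^bsub>G\<^esub> (snd y) \<otimes>\<^bsub>G\<^esub> p) < word_len W gw (inv\<^bsub>W\<^esub> y \<otimes>\<^bsub>W\<^esub> z)"
proof -
  obtain fy gy where yd: "y = (fy, gy)" by (cases y)
  obtain fz gz where zd: "z = (fz, gz)" by (cases z)
  have gy: "gy \<in> carrier G" using y yd by (simp add: W_carrier)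
  have wW: "inv\<^bsub>W\<^esub> y \<otimes>\<^bsub>W\<^esub> z \<in> carrier W" using y z by simp
  note R = reach_props[OF all_reach[OF wW]]
  note E = W_invmult[OF y[unfolded yd] z[unfolded zd]]
  show "word_len G S (inv\<^bsub>G\<^esub> (snd y) \<otimes>\<^bsub>G\<^esub> snd z) \<le> word_len W gw (inv\<^bsub>W\<^esub> y \<otimes>\<^bsub>W\<^esub> z)"
    using GW.word_len_le[OF R(1)] unfolding yd zd E by simp
  assume p: "p \<in> carrier G" and ne: "fst y p \<noteq> fst z p"
  have fyp: "fy p \<in> carrier H" "fz p \<in> carrier H" using fW y z yd zd by blast+
  have e: "gy \<otimes>\<^bsub>G\<^esub> (inv\<^bsub>G\<^esub> gy \<otimes>\<^bsub>G\<^esub> p) = p" using gy p by (simp add: G.m_assoc[symmetric])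
  have "inv\<^bsub>H\<^esub> fy p \<otimes>\<^bsub>H\<^esub> fz p \<noteq> \<one>\<^bsub>H\<^esub>"
  proof
    assume "inv\<^bsub>H\<^esub> fy p \<otimes>\<^bsub>H\<^esub> fz p = \<one>\<^bsub>H\<^esub>"
    then have "fz p = fy p" using fyp by (metis H.inv_closed H.inv_equality H.inv_inv)
    then show False using ne yd zd by simp
  qed
  then have "inv\<^bsub>G\<^esub> gy \<otimes>\<^bsub>G\<^esub> p \<in> supp H G (inv\<^bsub>W\<^esub> y \<otimes>\<^bsub>W\<^esub> z)"
    unfolding yd zd E supp_def using gy p e by simp
  then show "word_len G S (inv\<^bsub>G\<^esub> (snd y) \<otimes>\<^bsub>G\<^esub> p) < word_len W gw (inv\<^bsub>W\<^esub> y \<otimes>\<^bsub>W\<^esub> z)"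
    using R(3) yd by simp
qed

lemma chain:
  assumes ch: "(\<lambda>a b. a \<in> U \<and> b \<in> U \<and> word_dist W gw a b < r)\<^sup>*\<^sup>* x y"
    and x: "x \<in> U" and UW: "U \<subseteq> carrier W" and UV: "\<forall>a\<in>U. snd a \<in> V" and rR: "r \<le> R"
  shows "same_r_component V (word_dist G S) R (snd x) (snd y) \<and>
    (\<forall>p\<in>carrier G. fst x p \<noteq> fst y p \<longrightarrow> (\<exists>q. same_r_component V (word_dist G S) R (snd x) q
        \<and> real (word_len G S (inv\<^bsub>G\<^esub> q \<otimes>\<^bsub>G\<^esub> p)) < r))"
  using ch
proof (induction rule: rtranclp_induct)
  case base
  then show ?case using x UV unfolding same_r_component_def by auto
next
  case (step y z)
  have y: "y \<in> U" and z: "z \<in> U" and dyz: "word_dist W gw y z < r" using step.hyps by auto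
  have yW: "y \<in> carrier W" and zW: "z \<in> carrier W" using y z UW by auto
  have IH1: "same_r_component V (word_dist G S) R (snd x) (snd y)" using step.IH by blast
  have "word_dist G S (snd y) (snd z) < R"
    using proj_lamp(1)[OF yW zW] dyz rR unfolding word_dist_def by linarith
  then have "(\<lambda>a b. a \<in> V \<and> b \<in> V \<and> word_dist G S a b < R)\<^sup>*\<^sup>* (snd y) (snd z)"
    using y z UV by (auto intro: r_into_rtranclp)
  then have c1: "same_r_component V (word_dist G S) R (snd x) (snd z)"
    using IH1 unfolding same_r_component_def by (meson rtranclp_trans)
  have c2: "\<exists>q. same_r_component V (word_dist G S) R (snd x) q
        \<and> real (word_len G S (inv\<^bsub>G\<^esub> q \<otimes>\<^bsub>G\<^esub> p)) < r"
    if p: "p \<in> carrier G" and ne: "fst x p \<noteq> fst z p" for p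
  proof (cases "fst x p = fst y p")
    case False then show ?thesis using step.IH p by blast
  next
    case True
    then have "fst y p \<noteq> fst z p" using ne by simp
    then have "word_len G S (inv\<^bsub>G\<^esub> (snd y) \<otimes>\<^bsub>G\<^esub> p) < word_len W gw (inv\<^bsub>W\<^esub> y \<otimes>\<^bsub>W\<^esub> z)"
      using proj_lamp(2)[OF yW zW p] by simp
    then have "real (word_len G S (inv\<^bsub>G\<^esub> (snd y) \<otimes>\<^bsub>G\<^esub> p)) < r"
      using dyz unfolding word_dist_def by linarith
    then show ?thesis using IH1 by blast
  qed
  show ?case using c1 c2 by blast
qed

end



context wrL
begin

lemma rtranclp_mem: "(\<lambda>a b. a \<in> U \<and> b \<in> U \<and> P a b)\<^sup>*\<^sup>* x y \<Longrightarrow> x \<in> U \<Longrightarrow> y \<in> U"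
  by (induction rule: rtranclp_induct) auto

lemma diam_bound:
  assumes ch: "(\<lambda>a b. a \<in> U \<and> b \<in> U \<and> word_dist W gw a b < r)\<^sup>*\<^sup>* x y"
    and x: "x \<in> U" and UW: "U \<subseteq> carrier W" and UV: "\<forall>a\<in>U. snd a \<in> V" and VG: "V \<subseteq> carrier G" and rR: "r + 1 \<le> R"
    and r0: "0 < r"
    and Vd: "\<And>a b. same_r_component V (word_dist G S) R a b \<Longrightarrow> word_dist G S a b \<le> \<Delta>"
    and D0: "0 \<le> \<Delta>"
  shows "word_dist W gw x y \<le> 3 * (\<Delta> + R) * real (growth G S (\<Delta> + R))"
proof -
  have xW: "x \<in> carrier W" using x UW by auto
  have yW: "y \<in> carrier W" using rtranclp_mem[OF ch x] UW by auto
  note C = chain[OF ch x UW UV, of R]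
  have C1: "same_r_component V (word_dist G S) R (snd x) (snd y)" using C rR by simp
  have C2: "\<And>p. p \<in> carrier G \<Longrightarrow> fst x p \<noteq> fst y p \<Longrightarrow> (\<exists>q. same_r_component V (word_dist G S) R (snd x) q
        \<and> real (word_len G S (inv\<^bsub>G\<^esub> q \<otimes>\<^bsub>G\<^esub> p)) < r)" using C rR by simp
  obtain fx gx where xd: "x = (fx, gx)" by (cases x)
  obtain fy gy where yd: "y = (fy, gy)" by (cases y)
  have gx: "gx \<in> carrier G" and gy: "gy \<in> carrier G" using xW yW xd yd by (auto simp: W_carrier)
  define w where "w = inv\<^bsub>W\<^esub> x \<otimes>\<^bsub>W\<^esub> y"
  have wW: "w \<in> carrier W" using xW yW w_def by simp
  have wd: "w = ((\<lambda>z. if z \<in> carrier G then inv\<^bsub>H\<^esub> fx (gx \<otimes>\<^bsub>G\<^esub> z) \<otimes>\<^bsub>H\<^esub> fy (gx \<otimes>\<^bsub>G\<^esub> z) else \<one>\<^bsub>H\<^esub>),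
     inv\<^bsub>G\<^esub> gx \<otimes>\<^bsub>G\<^esub> gy)"
    unfolding w_def xd yd by (rule W_invmult[OF xW[unfolded xd] yW[unfolded yd]])
  define A where "A = supp H G w"
  define \<Gamma> where "\<Gamma> = growth G S (\<Delta> + R)"
  define Ball where "Ball = {g \<in> carrier G. real (word_len G S g) < \<Delta> + R}"
  have finBall: "finite Ball" unfolding Ball_def by (rule ball_finite[OF finS])
  have Aclose: "real (word_len G S z) < \<Delta> + r" if zA: "z \<in> A" for z
  proof -
    have zG: "z \<in> carrier G" using zA unfolding A_def supp_def by simp
    define p where "p = gx \<otimes>\<^bsub>G\<^esub> z"
    have pG: "p \<in> carrier G" using gx zG p_def by simp
    have "fst w z \<noteq> \<one>\<^bsub>H\<^esub>" using zA unfolding A_def supp_def by simp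
    then have "fx p \<noteq> fy p" unfolding wd p_def using zG fW[OF yW[unfolded yd]] by auto
    then obtain q where q1: "same_r_component V (word_dist G S) R gx q"
      and q2: "real (word_len G S (inv\<^bsub>G\<^esub> q \<otimes>\<^bsub>G\<^esub> p)) < r"
      using C2[OF pG] xd yd by auto
    have qV: "q \<in> carrier G"
    proof -
      have "gx \<in> V" "(\<lambda>a b. a \<in> V \<and> b \<in> V \<and> word_dist G S a b < R)\<^sup>*\<^sup>* gx q"
        using q1 unfolding same_r_component_def by auto
      then have "q \<in> V" using rtranclp_mem[of V "\<lambda>a b. word_dist G S a b < R" gx q] by blast
      then show ?thesis using VG by blast
    qed
    have zq: "z = (inv\<^bsub>G\<^esub> gx \<otimes>\<^bsub>G\<^esub> q) \<otimes>\<^bsub>G\<^esub> (inv\<^bsub>G\<^esub> q \<otimes>\<^bsub>G\<^esub> p)"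
    proof -
      have "q \<otimes>\<^bsub>G\<^esub> (inv\<^bsub>G\<^esub> q \<otimes>\<^bsub>G\<^esub> p) = p"
        using qV pG by (simp add: G.m_assoc[symmetric])
      then have "(inv\<^bsub>G\<^esub> gx \<otimes>\<^bsub>G\<^esub> q) \<otimes>\<^bsub>G\<^esub> (inv\<^bsub>G\<^esub> q \<otimes>\<^bsub>G\<^esub> p) = inv\<^bsub>G\<^esub> gx \<otimes>\<^bsub>G\<^esub> p"
        using gx qV pG by (simp add: G.m_assoc)
      also have "\<dots> = z" unfolding p_def using gx zG by (simp add: G.m_assoc[symmetric])
      finally show ?thesis by simp
    qed
    have "word_len G S z \<le> word_len G S (inv\<^bsub>G\<^esub> gx \<otimes>\<^bsub>G\<^esub> q) + word_len G S (inv\<^bsub>G\<^esub> q \<otimes>\<^bsub>G\<^esub> p)"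
      using zq GW.word_len_mult[OF G_reach G_reach] gx qV pG by simp
    moreover have "real (word_len G S (inv\<^bsub>G\<^esub> gx \<otimes>\<^bsub>G\<^esub> q)) \<le> \<Delta>"
      using Vd[OF q1] unfolding word_dist_def .
    ultimately show ?thesis using q2 by linarith
  qed
  have AG: "A \<subseteq> carrier G" unfolding A_def supp_def by blast
  have finA: "finite A" unfolding A_def by (rule supp_finite[OF wW])
  have hH: "\<forall>x. fst w x \<in> carrier H" using fW[of "fst w" "snd w"] wW by simp
  have hout: "\<forall>x. x \<notin> A \<longrightarrow> fst w x = \<one>\<^bsub>H\<^esub>"
  proof (intro allI impI)
    fix x assume "x \<notin> A"
    then show "fst w x = \<one>\<^bsub>H\<^esub>" using wW unfolding A_def supp_def
      by (cases "x \<in> carrier G") (auto simp: W_carrier[of "fst w" "snd w", simplified])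
  qed
  obtain n where n: "reach W gw n (fst w, \<one>\<^bsub>G\<^esub>)" "real n \<le> real (card A) * (2 * (\<Delta> + r) + 1)"
    using build[OF finA AG _ hH hout, of "\<Delta> + r"] Aclose by (auto simp: less_imp_le)
  have sw: "snd w \<in> carrier G" using wW W_carrier[of "fst w" "snd w"] by simp
  have wsplit: "w = (fst w, \<one>\<^bsub>G\<^esub>) \<otimes>\<^bsub>W\<^esub> wr_top H (snd w)"
    using top_split[of "fst w" "snd w"] wW by simp
  have "reach W gw (n + word_len G S (snd w)) w"
    using WW.reach_mult[OF n(1) reach_top[OF G_reach[OF sw]]] wsplit by simp
  then have wl: "word_len W gw w \<le> n + word_len G S (snd w)" by (rule WW.word_len_le)
  have sd: "real (word_len G S (snd w)) \<le> \<Delta>"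
    using Vd[OF C1] unfolding word_dist_def xd yd wd by simp
  have AB: "A \<subseteq> Ball" unfolding Ball_def using Aclose AG rR by fastforce
  have cA: "card A \<le> \<Gamma>" unfolding \<Gamma>_def growth_def Ball_def[symmetric] by (rule card_mono[OF finBall AB])
  have "\<one>\<^bsub>G\<^esub> \<in> Ball" unfolding Ball_def using GW.word_len_one D0 rR r0 by simp
  then have G1: "1 \<le> \<Gamma>" unfolding \<Gamma>_def growth_def Ball_def[symmetric]
    using finBall by (metis One_nat_def Suc_leI card_gt_0_iff empty_iff)
  have "real (card A) * (2 * (\<Delta> + r) + 1) \<le> real \<Gamma> * (2 * (\<Delta> + R))"
    by (rule mult_mono) (use cA rR D0 r0 in auto)
  moreover have "\<Delta> \<le> real \<Gamma> * (\<Delta> + R)"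
  proof -
    have "\<Delta> \<le> 1 * (\<Delta> + R)" using rR r0 by simp
    also have "\<dots> \<le> real \<Gamma> * (\<Delta> + R)" by (rule mult_right_mono) (use G1 D0 rR r0 in auto)
    finally show ?thesis .
  qed
  ultimately have "real (word_len W gw w) \<le> real \<Gamma> * (2 * (\<Delta> + R)) + real \<Gamma> * (\<Delta> + R)"
    using wl n(2) sd by (smt (verit) of_nat_add of_nat_mono)
  then show ?thesis unfolding word_dist_def w_def[symmetric] \<Gamma>_def[symmetric] by (simp add: algebra_simps)
qed

end



context wrL
begin

lemma upper:
  assumes cfG: "control_function (carrier G) (word_dist G S) n DG" and nk: "n \<le> k"
  shows "\<exists>D. control_function (carrier W) (word_dist W gw) k D
              \<and> weakly_dominates
                  (\<lambda>t. (DG t + ereal t) *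
                        (case DG t + ereal t of
                           ereal s \<Rightarrow> ereal (real (growth G S s))
                         | _ \<Rightarrow> \<infinity>))
                  D"
proof -
  define f where "f = (\<lambda>t. (DG t + ereal t) *
                        (case DG t + ereal t of
                           ereal s \<Rightarrow> ereal (real (growth G S s))
                         | _ \<Rightarrow> \<infinity>))"
  have cfG1: "\<forall>t\<ge>0. 0 \<le> DG t"
    and cfG2: "\<forall>r>0. \<exists>U :: nat \<Rightarrow> 'g set.
        (\<forall>i\<le>n. U i \<subseteq> carrier G) \<and> carrier G \<subseteq> (\<Union>i\<le>n. U i) \<and>
        (\<forall>x\<in>carrier G. \<exists>i\<le>n. open_ball_in (carrier G) (word_dist G S) x r \<subseteq> U i) \<and>
        (\<forall>i\<le>n. \<forall>x y. same_r_component (U i) (word_dist G S) r x y \<longrightarrow> ereal (word_dist G S x y) \<le> DG r)"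
    using cfG unfolding control_function_def by (blast, blast)
  have fPInf: "f s = \<infinity>" if "DG s = \<infinity>" for s
    unfolding f_def using that by simp
  have freal: "f s = ereal ((\<Delta> + s) * real (growth G S (\<Delta> + s)))" if "DG s = ereal \<Delta>" for s \<Delta>
    unfolding f_def using that by simp
  have fnn: "0 \<le> f s" if "0 \<le> s" for s
  proof (cases "DG s")
    case (real \<Delta>)
    then have "0 \<le> \<Delta>" using cfG1 that by fastforce
    then show ?thesis using freal[OF real] that by simp
  next
    case PInf then show ?thesis using fPInf by simp
  next
    case MInf then show ?thesis using cfG1 that by fastforce
  qed
  define D where "D = (\<lambda>t. ereal 3 * f (3 * t + 1))"
  have cf: "control_function (carrier W) (word_dist W gw) k D"
    unfolding control_function_def
  proof (intro conjI allI impI)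
    fix t :: real assume "0 \<le> t"
    then show "0 \<le> D t" unfolding D_def using fnn[of "3 * t + 1"] by simp
  next
    fix r :: real assume r0: "0 < r"
    define R where "R = 3 * r + 1"
    have R0: "0 < R" and rR: "r + 1 \<le> R" using r0 by (auto simp: R_def)
    obtain V where V1: "\<forall>i\<le>n. V i \<subseteq> carrier G"
      and V3: "\<forall>x\<in>carrier G. \<exists>i\<le>n. open_ball_in (carrier G) (word_dist G S) x R \<subseteq> V i"
      and V4: "\<forall>i\<le>n. \<forall>x y. same_r_component (V i) (word_dist G S) R x y \<longrightarrow> ereal (word_dist G S x y) \<le> DG R"
      using cfG2[rule_format, OF R0] by (elim exE conjE) (rule that)
    define U where "U i = {x \<in> carrier W. i \<le> n \<and> snd x \<in> V i}" for i
    have ballsub: "open_ball_in (carrier W) (word_dist W gw) x r \<subseteq> U i"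
      if x: "x \<in> carrier W" and i: "i \<le> n" and Vi: "open_ball_in (carrier G) (word_dist G S) (snd x) R \<subseteq> V i" for x i
    proof
      fix y assume "y \<in> open_ball_in (carrier W) (word_dist W gw) x r"
      then have y: "y \<in> carrier W" and dy: "word_dist W gw x y < r" unfolding open_ball_in_def by auto
      have "word_dist G S (snd x) (snd y) < R"
        using proj_lamp(1)[OF x y] dy rR unfolding word_dist_def by linarith
      moreover have "snd y \<in> carrier G" using y W_carrier[of "fst y" "snd y"] by simp
      ultimately have "snd y \<in> V i" using Vi unfolding open_ball_in_def by blast
      then show "y \<in> U i" using y i unfolding U_def by blast
    qed
    show "\<exists>U :: nat \<Rightarrow> (('g \<Rightarrow> 'h) \<times> 'g) set. (\<forall>i\<le>k. U i \<subseteq> carrier W) \<and> carrier W \<subseteq> (\<Union>i\<le>k. U i) \<and>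
        (\<forall>x\<in>carrier W. \<exists>i\<le>k. open_ball_in (carrier W) (word_dist W gw) x r \<subseteq> U i) \<and>
        (\<forall>i\<le>k. \<forall>x y. same_r_component (U i) (word_dist W gw) r x y \<longrightarrow> ereal (word_dist W gw x y) \<le> D r)"
    proof (intro exI[of _ U] conjI)
      show "\<forall>i\<le>k. U i \<subseteq> carrier W" unfolding U_def by blast
      show ball: "\<forall>x\<in>carrier W. \<exists>i\<le>k. open_ball_in (carrier W) (word_dist W gw) x r \<subseteq> U i"
      proof
        fix x assume x: "x \<in> carrier W"
        have "snd x \<in> carrier G" using x W_carrier[of "fst x" "snd x"] by simp
        then obtain i where i: "i \<le> n" "open_ball_in (carrier G) (word_dist G S) (snd x) R \<subseteq> V i"
          using V3 by blast
        then show "\<exists>i\<le>k. open_ball_in (carrier W) (word_dist W gw) x r \<subseteq> U i"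
          using ballsub[OF x i] nk by (intro exI[of _ i]) auto
      qed
      show "carrier W \<subseteq> (\<Union>i\<le>k. U i)"
      proof
        fix x assume x: "x \<in> carrier W"
        obtain i where "i \<le> k" "open_ball_in (carrier W) (word_dist W gw) x r \<subseteq> U i" using ball x by blast
        moreover have "x \<in> open_ball_in (carrier W) (word_dist W gw) x r"
          unfolding open_ball_in_def using x word_dist_self[OF x] r0 by simp
        ultimately show "x \<in> (\<Union>i\<le>k. U i)" by blast
      qed
      show "\<forall>i\<le>k. \<forall>x y. same_r_component (U i) (word_dist W gw) r x y \<longrightarrow> ereal (word_dist W gw x y) \<le> D r"
      proof (intro allI impI)
        fix i x y assume ik: "i \<le> k" and sc: "same_r_component (U i) (word_dist W gw) r x y"
        have xU: "x \<in> U i" and ch: "(\<lambda>a b. a \<in> U i \<and> b \<in> U i \<and> word_dist W gw a b < r)\<^sup>*\<^sup>* x y"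
          using sc unfolding same_r_component_def by auto
        have i: "i \<le> n" using xU unfolding U_def by blast
        have DR0: "0 \<le> DG R" using cfG1 R0 by simp
        show "ereal (word_dist W gw x y) \<le> D r"
        proof (cases "DG R")
          case PInf
          then show ?thesis unfolding D_def R_def[symmetric] using fPInf[OF PInf] by simp
        next
          case MInf then show ?thesis using DR0 by simp
        next
          case (real \<Delta>)
          have D0: "0 \<le> \<Delta>" using DR0 real by simp
          have Vd: "word_dist G S a b \<le> \<Delta>" if "same_r_component (V i) (word_dist G S) R a b" for a b
            using V4 i that real by fastforce
          have "word_dist W gw x y \<le> 3 * (\<Delta> + R) * real (growth G S (\<Delta> + R))"
          proof (rule diam_bound[OF ch xU _ _ _ rR r0 Vd D0])
            show "U i \<subseteq> carrier W" unfolding U_def by blast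
            show "\<forall>a\<in>U i. snd a \<in> V i" unfolding U_def by blast
            show "V i \<subseteq> carrier G" using V1 i by blast
          qed
          then show ?thesis unfolding D_def R_def[symmetric] using freal[OF real] by (simp add: algebra_simps)
        qed
      qed
    qed
  qed
  have wd: "weakly_dominates f D"
  proof -
    have "\<forall>t\<ge>0. D t \<le> ereal 3 * f (3 * t + 1) + ereal 1"
      unfolding D_def by (intro allI impI ereal_le_add_self) simp
    then show ?thesis unfolding weakly_dominates_def
      by (intro exI[where x="3::real"] exI[where x="1::real"]) simp
  qed
  show ?thesis using cf wd unfolding f_def by blast
qed

end

theorem theorem4p5:
  fixes G :: "('g, 'd) monoid_scheme" and H :: "('h, 'c) monoid_scheme"
    and S :: "'g set" and n :: nat and DG :: "real \<Rightarrow> ereal"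
  assumes "group G" and "S \<subseteq> carrier G" and "finite S" and "generate G S = carrier G"
    and "infinite (carrier G)"
    and "group H" and "finite (carrier H)" and "carrier H \<noteq> {\<one>\<^bsub>H\<^esub>}"
    and "control_function (carrier G) (word_dist G S) n DG"
  shows "(\<forall>k\<ge>n. \<exists>D. control_function (carrier (wreath H G))
                         (word_dist (wreath H G) (wreath_gens H G S)) k D
                    \<and> weakly_dominates
                        (\<lambda>t. (DG t + ereal t) *
                              (case DG t + ereal t of
                                 ereal s \<Rightarrow> ereal (real (growth G S s))
                               | _ \<Rightarrow> \<infinity>))
                        D)
       \<and> (\<forall>k\<ge>n. \<forall>D. control_function (carrier (wreath H G))
                         (word_dist (wreath H G) (wreath_gens H G S)) k D
                    \<longrightarrow> weakly_dominates D (\<lambda>t. ereal (real (growth G S t))))"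
proof -
  obtain h0 where h0: "h0 \<in> carrier H" "h0 \<noteq> \<one>\<^bsub>H\<^esub>"
    using assms(6,8) monoid.one_closed[OF group.is_monoid[OF assms(6)]] by blast
  interpret L: wrL G H S h0
    by (intro wrL.intro wrS.intro wrctx.intro wrS_axioms.intro wrL_axioms.intro assms h0)
  show ?thesis
    using L.upper[OF assms(9)] L.lower by blast
qed

end
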